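(* Let $s,b\ge1$ and let $(a_n)$ be the $(s,b)$-Generacci sequence. Define $f$ on positive integers by $f(kb+j)=sb+j-1$ for $k\ge0$ and $j\in\{1,\dots,b\}$. Then for every integer $N\ge s$ and every $j\in\{2,\dots,b+1\}$, writing $n=j+Nb$, \[ a_n \;=\; a_{n-1}+a_{n-1-f(n-1)}, \qquad\text{i.e.}\qquad a_{j+Nb}=a_{j-1+Nb}+a_{1+(N-s)b}. \]
   Context: Fix integers $s,b\ge1$. For an increasing sequence of positive integers $(a_i)_{i\ge1}$, the bins are $\mathcal B_n=\{a_{b(n-1)+1},\dots,a_{bn}\}$ for $n\ge1$, and $\mathcal B_n=\emptyset$ for $n\le 0$. An $(s,b)$-Generacci legal decomposition of a positive integer $m$ using this sequence is an expression $m=a_{\ell_1}+\cdots+a_{\ell_k}$ with $a_{\ell_1}>a_{\ell_2}>\cdots>a_{\ell_k}$ such that for all $i$ and all $j$, $\{a_{\ell_i},a_{\ell_{i+1}}\}\not\subset \mathcal B_{j-s}\cup\mathcal B_{j-s+1}\cup\cdots\cup\mathcal B_j$ (so no two summands lie in the same bin, and the bins containing any two summands have at least $s$ bins strictly between them). The $(s,b)$-Generacci sequence is the increasing sequence of positive integers $(a_i)_{i\ge1}$ in which each $a_i$ is the smallest positive integer that has no $(s,b)$-Generacci legal decomposition using only elements of $\{a_1,\dots,a_{i-1}\}$. *)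

theory Defs
  imports Main
begin

text \<open>Bins, indexed by integers: the bin number n (n >= 1) consists of the sequence
  positions b(n-1)+1, ..., bn; bins with n <= 0 are empty.\<close>
definition bin_idx :: "nat \<Rightarrow> int \<Rightarrow> nat set" where
  "bin_idx b n = (if n \<le> 0 then {} else {nat (int b * (n - 1)) + 1 .. nat (int b * n)})"

definition legal_decomp :: "nat \<Rightarrow> nat \<Rightarrow> (nat \<Rightarrow> nat) \<Rightarrow> nat \<Rightarrow> nat \<Rightarrow> nat list \<Rightarrow> bool" where
  "legal_decomp s b a i m ls \<longleftrightarrow>
     ls \<noteq> [] \<and> set ls \<subseteq> {1..<i} \<and>
     sorted_wrt (>) (map a ls) \<and>
     m = sum_list (map a ls) \<and>
     (\<forall>t. Suc t < length ls \<longrightarrow>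
        (\<forall>j::int. \<not> ({ls ! t, ls ! Suc t} \<subseteq> (\<Union>r\<in>{j - int s .. j}. bin_idx b r))))"

definition has_legal_decomp :: "nat \<Rightarrow> nat \<Rightarrow> (nat \<Rightarrow> nat) \<Rightarrow> nat \<Rightarrow> nat \<Rightarrow> bool" where
  "has_legal_decomp s b a i m \<longleftrightarrow> (\<exists>ls. legal_decomp s b a i m ls)"

text \<open>a is the (s,b)-Generacci sequence (indexed from 1; a 0 is irrelevant):
  each a_i is the least positive integer with no legal decomposition using a_1..a_(i-1).\<close>
definition is_generacci :: "nat \<Rightarrow> nat \<Rightarrow> (nat \<Rightarrow> nat) \<Rightarrow> bool" where
  "is_generacci s b a \<longleftrightarrow>
     (\<forall>i\<ge>1. a i = (LEAST m. 0 < m \<and> \<not> has_legal_decomp s b a i m))"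

text \<open>f(kb+j) = sb+j-1 for k >= 0, j in {1..b}.\<close>
definition gen_f :: "nat \<Rightarrow> nat \<Rightarrow> nat \<Rightarrow> nat" where
  "gen_f s b n = s * b + (n - 1) mod b"

end

theory Submission
  imports Defs
begin

function gg :: "nat \<Rightarrow> nat \<Rightarrow> nat \<Rightarrow> nat" where
  "gg s b n = (if n < s * b + 2 then n
     else gg s b (n - 1) + gg s b (((n - 2) div b - s) * b + 1))"
  by auto
termination
proof (relation "measure (\<lambda>(s,b,n). n)")
  fix s b n :: nat
  assume "\<not> n < s * b + 2"
  have "((n - 2) div b - s) * b \<le> (n - 2) div b * b" by simp
  also have "\<dots> \<le> n - 2" by simp
  finally show "((s, b, ((n - 2) div b - s) * b + 1), s, b, n) \<in> measure (\<lambda>(s, b, n). n)"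
    using \<open>\<not> n < s * b + 2\<close> by simp
qed auto

declare gg.simps[simp del]

lemma gg_small: "n < s * b + 2 \<Longrightarrow> gg s b n = n"
  by (simp add: gg.simps)

lemma gg_rec: "n \<ge> s * b + 2 \<Longrightarrow> gg s b n = gg s b (n - 1) + gg s b (((n - 2) div b - s) * b + 1)"
  by (subst gg.simps) simp

lemma c_less: fixes n s b :: nat shows "n \<ge> s * b + 2 \<Longrightarrow> ((n - 2) div b - s) * b + 1 < n"
proof -
  assume a: "n \<ge> s * b + 2"
  have "((n - 2) div b - s) * b \<le> (n - 2) div b * b" by simp
  also have "\<dots> \<le> n - 2" by simp
  finally show ?thesis using a by simp
qed

lemma div_bound: "(b::nat) \<ge> 1 \<Longrightarrow> x < (x div b + 1) * b"
proof -
  assume "b \<ge> 1"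
  then have "x mod b < b" by simp
  moreover have "x = x div b * b + x mod b" by simp
  ultimately have "x < x div b * b + b" by linarith
  then show ?thesis by (simp add: algebra_simps)
qed

lemma gg_pos: "n \<ge> 1 \<Longrightarrow> gg s b n \<ge> 1"
proof (induction n rule: less_induct)
  case (less n)
  show ?case
  proof (cases "n < s * b + 2")
    case True then show ?thesis using less by (simp add: gg_small)
  next
    case False
    then have "gg s b (((n - 2) div b - s) * b + 1) \<ge> 1"
      using less.IH c_less[of s b n] by simp
    then show ?thesis using gg_rec[of s b n] False by simp
  qed
qed

lemma gg_Suc: "gg s b n < gg s b (Suc n)"
proof (cases "Suc n < s * b + 2")
  case True then show ?thesis by (simp add: gg_small)
next
  case False
  then have "gg s b (Suc n) = gg s b n + gg s b (((Suc n - 2) div b - s) * b + 1)"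
    using gg_rec[of s b "Suc n"] by simp
  moreover have "gg s b (((Suc n - 2) div b - s) * b + 1) \<ge> 1" by (rule gg_pos) simp
  ultimately show ?thesis by simp
qed

lemma gg_smono: "strict_mono (gg s b)"
  using gg_Suc strict_mono_Suc_iff by blast

lemma gg_mono: "x \<le> y \<Longrightarrow> gg s b x \<le> gg s b y"
  using gg_smono strict_mono_less_eq by blast

definition binof :: "nat \<Rightarrow> nat \<Rightarrow> nat" where
  "binof b x = (x - 1) div b + 1"

abbreviation chain :: "nat \<Rightarrow> nat \<Rightarrow> nat list \<Rightarrow> bool" where
  "chain s b ls \<equiv> successively (\<lambda>x y. binof b y + s < binof b x) ls"

lemma upper:
  assumes "b \<ge> 1" "chain s b (p # rest)" "set (p # rest) \<subseteq> {1..}"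
  shows "sum_list (map (gg s b) (p # rest)) < gg s b (p + 1)"
  using assms(2,3)
proof (induction rest arbitrary: p)
  case Nil then show ?case using gg_Suc[of s b p] by simp
next
  case (Cons q rest)
  have bq: "binof b q + s < binof b p" using Cons.prems by simp
  have q1: "q \<ge> 1" "p \<ge> 1" using Cons.prems by auto
  have IH: "sum_list (map (gg s b) (q # rest)) < gg s b (q + 1)"
    using Cons by simp
  have d: "(q - 1) div b + 1 \<le> (p - 1) div b - s" using bq by (simp add: binof_def)
  have "q - 1 < ((q - 1) div b + 1) * b" using div_bound assms(1) by blast
  also have "\<dots> \<le> ((p - 1) div b - s) * b" by (rule mult_le_mono1[OF d])
  finally have qc: "q + 1 \<le> ((p - 1) div b - s) * b + 1" using q1 by simp
  have ps: "p + 1 \<ge> s * b + 2"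
  proof -
    have "s + 1 \<le> (p - 1) div b" using d by simp
    then have "(s + 1) * b \<le> (p - 1) div b * b" by (rule mult_le_mono1)
    also have "\<dots> \<le> p - 1" by simp
    finally have "s * b + b \<le> p - 1" by (simp add: algebra_simps)
    then show ?thesis using q1 assms(1) by linarith
  qed
  have rec: "gg s b (p + 1) = gg s b p + gg s b (((p - 1) div b - s) * b + 1)"
    using gg_rec[OF ps] by simp
  have "sum_list (map (gg s b) (p # q # rest)) = gg s b p + sum_list (map (gg s b) (q # rest))"
    by simp
  also have "\<dots> < gg s b p + gg s b (q + 1)" using IH by simp
  also have "\<dots> \<le> gg s b (p + 1)" using rec gg_mono[OF qc, of s] by simp
  finally show ?case .
qed

lemma lower:
  assumes "b \<ge> 1"
  shows "1 \<le> m \<Longrightarrow> m < gg s b i \<Longrightarrow>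
    \<exists>ls. ls \<noteq> [] \<and> set ls \<subseteq> {1..<i} \<and> chain s b ls \<and> sum_list (map (gg s b) ls) = m"
proof (induction i arbitrary: m rule: less_induct)
  case (less i)
  show ?case
  proof (cases "i < s * b + 2")
    case True
    then have "gg s b i = i" by (rule gg_small)
    moreover have "gg s b m = m" using True less.prems \<open>gg s b i = i\<close> by (simp add: gg_small)
    ultimately show ?thesis using less.prems by (intro exI[of _ "[m]"]) auto
  next
    case False
    define c where "c = ((i - 2) div b - s) * b + 1"
    have rec: "gg s b i = gg s b (i - 1) + gg s b c" using gg_rec[of s b i] False c_def by simp
    have ci: "c < i" using c_less[of s b i] False c_def by simp
    have i2: "i \<ge> 2" using False by simp
    consider "m < gg s b (i - 1)" | "m = gg s b (i - 1)" | "m > gg s b (i - 1)" by linarith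
    then show ?thesis
    proof cases
      case 1
      then obtain ls where "ls \<noteq> [] \<and> set ls \<subseteq> {1..<i - 1} \<and> chain s b ls \<and> sum_list (map (gg s b) ls) = m"
        using less.IH[of "i - 1" m] less.prems i2 by auto
      moreover have "{1..<i - 1} \<subseteq> {1..<(i::nat)}" by auto
      ultimately show ?thesis by blast
    next
      case 2
      then show ?thesis using i2 by (intro exI[of _ "[i - 1]"]) auto
    next
      case 3
      define m' where "m' = m - gg s b (i - 1)"
      have "1 \<le> m'" "m' < gg s b c" using 3 rec less.prems m'_def by auto
      then obtain ls where ls: "ls \<noteq> [] \<and> set ls \<subseteq> {1..<c} \<and> chain s b ls \<and> sum_list (map (gg s b) ls) = m'"
        using less.IH[OF ci] by blast
      then obtain q r where qr: "ls = q # r" by (cases ls) auto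
      have q: "1 \<le> q" "q < c" using ls qr by auto
      then have "q - 1 < ((i - 2) div b - s) * b" using c_def by simp
      then have "(q - 1) div b < (i - 2) div b - s" by (rule less_mult_imp_div_less)
      then have "binof b q + s < binof b (i - 1)" unfolding binof_def using i2
        by (simp add: numeral_2_eq_2)
      then have ch: "chain s b ((i - 1) # ls)" using ls qr by simp
      have "set ((i - 1) # ls) \<subseteq> {1..<i}" using ls ci i2 by auto
      moreover have "sum_list (map (gg s b) ((i - 1) # ls)) = m" using ls m'_def 3 by simp
      ultimately show ?thesis using ch by (intro exI[of _ "(i - 1) # ls"]) auto
    qed
  qed
qed

lemma mem_bin:
  assumes "b \<ge> 1" "x \<ge> 1"
  shows "x \<in> bin_idx b r \<longleftrightarrow> r = int (binof b x)"
proof (cases "r \<le> 0")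
  case True then show ?thesis by (simp add: bin_idx_def binof_def)
next
  case False
  define k where "k = nat r"
  have k: "r = int k" "k \<ge> 1" using False k_def by auto
  have i1: "int b * (r - 1) = int (b * (k - 1))" using k by (simp add: of_nat_diff)
  have e1: "nat (int b * (r - 1)) = b * (k - 1)" unfolding i1 by (rule nat_int)
  have i2: "int b * r = int (b * k)" using k by simp
  have e2: "nat (int b * r) = b * k" unfolding i2 by (rule nat_int)
  have "x \<in> bin_idx b r \<longleftrightarrow> b * (k - 1) + 1 \<le> x \<and> x \<le> b * k"
    using False e1 e2 by (simp add: bin_idx_def)
  also have "\<dots> \<longleftrightarrow> (x - 1) div b = k - 1"
  proof
    assume h: "b * (k - 1) + 1 \<le> x \<and> x \<le> b * k"
    show "(x - 1) div b = k - 1"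
      using h k by (intro div_nat_eqI) auto
  next
    assume h: "(x - 1) div b = k - 1"
    have d2: "x - 1 < ((x - 1) div b + 1) * b" using div_bound assms(1) by blast
    have d1: "(x - 1) div b * b \<le> x - 1" by simp
    have f1: "(k - 1) * b \<le> x - 1" using d1 unfolding h .
    have kk: "k - 1 + 1 = k" using k by simp
    have f2: "x - 1 < k * b" using d2 unfolding h kk .
    have c: "b * (k - 1) = (k - 1) * b" "b * k = k * b" by simp_all
    show "b * (k - 1) + 1 \<le> x \<and> x \<le> b * k"
      unfolding c using f1 f2 assms(2) by linarith
  qed
  also have "\<dots> \<longleftrightarrow> r = int (binof b x)" unfolding binof_def using k by linarith
  finally show ?thesis .
qed

lemma pair_bins:
  assumes "b \<ge> 1" "x \<ge> 1" "y \<ge> 1"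
  shows "(\<exists>j::int. {x, y} \<subseteq> (\<Union>r\<in>{j - int s..j}. bin_idx b r)) \<longleftrightarrow>
    \<not> (binof b y + s < binof b x) \<and> \<not> (binof b x + s < binof b y)"
proof -
  have u: "z \<in> (\<Union>r\<in>{j - int s..j}. bin_idx b r) \<longleftrightarrow> j - int s \<le> int (binof b z) \<and> int (binof b z) \<le> j"
    if "z \<ge> 1" for z j
    using mem_bin[OF assms(1) that] by auto
  show ?thesis
  proof
    assume "\<exists>j::int. {x, y} \<subseteq> (\<Union>r\<in>{j - int s..j}. bin_idx b r)"
    then obtain j :: int where "x \<in> (\<Union>r\<in>{j - int s..j}. bin_idx b r)" "y \<in> (\<Union>r\<in>{j - int s..j}. bin_idx b r)"
      by auto
    then show "\<not> (binof b y + s < binof b x) \<and> \<not> (binof b x + s < binof b y)"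
      using u assms by auto
  next
    assume h: "\<not> (binof b y + s < binof b x) \<and> \<not> (binof b x + s < binof b y)"
    define j where "j = max (int (binof b x)) (int (binof b y))"
    have "{x, y} \<subseteq> (\<Union>r\<in>{j - int s..j}. bin_idx b r)"
      using u[of x j] u[of y j] assms h unfolding j_def by auto
    then show "\<exists>j::int. {x, y} \<subseteq> (\<Union>r\<in>{j - int s..j}. bin_idx b r)" by blast
  qed
qed

lemma binof_mono: "x \<le> y \<Longrightarrow> binof b x \<le> binof b y"
  unfolding binof_def by (simp add: div_le_mono)

lemma legal_iff:
  assumes "b \<ge> 1" "\<And>k. 1 \<le> k \<Longrightarrow> k < i \<Longrightarrow> a k = gg s b k"
  shows "legal_decomp s b a i m ls \<longleftrightarrow>
    (ls \<noteq> [] \<and> set ls \<subseteq> {1..<i} \<and> chain s b ls \<and> m = sum_list (map (gg s b) ls))"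
proof -
  have mapeq: "map a ls = map (gg s b) ls" if "set ls \<subseteq> {1..<i}"
    using that assms(2) by (intro map_cong) auto
  have sw: "sorted_wrt (>) (map (gg s b) ls) \<longleftrightarrow> sorted_wrt (>) ls"
    by (simp add: sorted_wrt_map strict_mono_less[OF gg_smono])
  show ?thesis
  proof
    assume L: "legal_decomp s b a i m ls"
    then have set: "set ls \<subseteq> {1..<i}" and ne: "ls \<noteq> []" unfolding legal_decomp_def by auto
    have sl: "sorted_wrt (>) ls" using L mapeq[OF set] sw unfolding legal_decomp_def by auto
    have "chain s b ls"
      unfolding successively_conv_nth
    proof (intro allI impI)
      fix t assume t: "Suc t < length ls"
      have gt: "ls ! Suc t < ls ! t" using sl t by (simp add: sorted_wrt_iff_nth_less)
      have mm: "ls ! t \<in> set ls" "ls ! Suc t \<in> set ls" using t by auto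
      have pos: "ls ! t \<ge> 1" "ls ! Suc t \<ge> 1" using set mm by (meson atLeastLessThan_iff subsetD)+
      have "\<not> (\<exists>j::int. {ls ! t, ls ! Suc t} \<subseteq> (\<Union>r\<in>{j - int s..j}. bin_idx b r))"
        using L t unfolding legal_decomp_def by blast
      then have "binof b (ls ! Suc t) + s < binof b (ls ! t) \<or> binof b (ls ! t) + s < binof b (ls ! Suc t)"
        using pair_bins[OF assms(1) pos] by blast
      moreover have "binof b (ls ! Suc t) \<le> binof b (ls ! t)" using gt binof_mono by simp
      ultimately show "binof b (ls ! Suc t) + s < binof b (ls ! t)" by linarith
    qed
    then show "ls \<noteq> [] \<and> set ls \<subseteq> {1..<i} \<and> chain s b ls \<and> m = sum_list (map (gg s b) ls)"
      using L mapeq[OF set] ne set unfolding legal_decomp_def by auto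
  next
    assume R: "ls \<noteq> [] \<and> set ls \<subseteq> {1..<i} \<and> chain s b ls \<and> m = sum_list (map (gg s b) ls)"
    have "successively (>) ls"
      using R by (rule_tac successively_mono[of "\<lambda>x y. binof b y + s < binof b x"])
        (auto, metis binof_mono not_le add_lessD1 leD)
    then have srt: "sorted_wrt (>) ls" by (simp add: successively_conv_sorted_wrt transp_def)
    have me: "map a ls = map (gg s b) ls" using mapeq R by blast
    have adj: "\<forall>t. Suc t < length ls \<longrightarrow>
        (\<forall>j::int. \<not> ({ls ! t, ls ! Suc t} \<subseteq> (\<Union>r\<in>{j - int s .. j}. bin_idx b r)))"
    proof (intro allI impI)
      fix t j assume t: "Suc t < length ls"
      have mm: "ls ! t \<in> set ls" "ls ! Suc t \<in> set ls" using t by auto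
      have pos: "ls ! t \<ge> 1" "ls ! Suc t \<ge> 1" using R mm by (meson atLeastLessThan_iff subsetD)+
      have "binof b (ls ! Suc t) + s < binof b (ls ! t)" using R t successively_nth by blast
      then show "\<not> ({ls ! t, ls ! Suc t} \<subseteq> (\<Union>r\<in>{j - int s .. j}. bin_idx b r))"
        using pair_bins[OF assms(1) pos] by blast
    qed
    show "legal_decomp s b a i m ls"
      unfolding legal_decomp_def me using R sw srt adj by blast
  qed
qed

lemma a_eq_gg:
  assumes "b \<ge> 1" "is_generacci s b a"
  shows "i \<ge> 1 \<Longrightarrow> a i = gg s b i"
proof (induction i rule: less_induct)
  case (less i)
  have IH: "\<And>k. 1 \<le> k \<Longrightarrow> k < i \<Longrightarrow> a k = gg s b k" using less.IH by blast
  have hd: "has_legal_decomp s b a i m \<longleftrightarrow>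
     (\<exists>ls. ls \<noteq> [] \<and> set ls \<subseteq> {1..<i} \<and> chain s b ls \<and> m = sum_list (map (gg s b) ls))" for m
    unfolding has_legal_decomp_def using legal_iff[OF assms(1) IH] by blast
  have ai: "a i = (LEAST m. 0 < m \<and> \<not> has_legal_decomp s b a i m)"
    using assms(2) less.prems unfolding is_generacci_def by blast
  have nd: "\<not> has_legal_decomp s b a i (gg s b i)"
  proof
    assume "has_legal_decomp s b a i (gg s b i)"
    then obtain ls where ls: "ls \<noteq> []" "set ls \<subseteq> {1..<i}" "chain s b ls"
      "gg s b i = sum_list (map (gg s b) ls)" using hd by blast
    then obtain p r where pr: "ls = p # r" by (cases ls) auto
    have "set (p # r) \<subseteq> {1..}" using ls pr by auto
    then have "sum_list (map (gg s b) ls) < gg s b (p + 1)" using upper[OF assms(1)] ls pr by blast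
    moreover have "p + 1 \<le> i" using ls pr by auto
    ultimately show False using gg_mono[of "p + 1" i s b] ls by simp
  qed
  have "(LEAST m. 0 < m \<and> \<not> has_legal_decomp s b a i m) = gg s b i"
  proof (rule Least_equality)
    show "0 < gg s b i \<and> \<not> has_legal_decomp s b a i (gg s b i)"
      using gg_pos[OF less.prems, of s b] nd by simp
  next
    fix y assume y: "0 < y \<and> \<not> has_legal_decomp s b a i y"
    show "gg s b i \<le> y"
    proof (rule ccontr)
      assume "\<not> gg s b i \<le> y"
      then obtain ls where "ls \<noteq> [] \<and> set ls \<subseteq> {1..<i} \<and> chain s b ls \<and> sum_list (map (gg s b) ls) = y"
        using lower[OF assms(1), of y s i] y by auto
      then show False using y hd by metis
    qed
  qed
  then show ?case using ai by simp
qed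

theorem mainTheorem2:
  fixes s b N j :: nat and a :: "nat \<Rightarrow> nat"
  assumes "s \<ge> 1" and "b \<ge> 1" and "is_generacci s b a"
    and "N \<ge> s" and "2 \<le> j" and "j \<le> b + 1"
  shows "a (j + N * b) = a (j + N * b - 1) + a (j + N * b - 1 - gen_f s b (j + N * b - 1))
       \<and> a (j + N * b) = a (j - 1 + N * b) + a (1 + (N - s) * b)"
proof -
  define n where "n = j + N * b"
  have sbN: "s * b \<le> N * b" using assms(4) by simp
  have n2: "n \<ge> s * b + 2" using n_def sbN assms(5) by linarith
  have e2: "n - 2 = (j - 2) + N * b" using n_def assms(5) by simp
  have jb: "j - 2 < b" using assms(5,6) by simp
  have md: "(n - 2) mod b = j - 2" unfolding e2 using jb by simp
  have dv: "(n - 2) div b = N" unfolding e2 using jb assms(2) by simp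
  have gf: "gen_f s b (n - 1) = s * b + (j - 2)"
    unfolding gen_f_def using md by (simp add: numeral_2_eq_2)
  have idx: "n - 1 - gen_f s b (n - 1) = 1 + (N - s) * b"
  proof -
    have "(N - s) * b = N * b - s * b" by (simp add: diff_mult_distrib)
    then show ?thesis using gf n_def sbN assms(5) by arith
  qed
  have e1: "n - 1 = j - 1 + N * b" using n_def assms(5) by simp
  have rec: "gg s b n = gg s b (n - 1) + gg s b (1 + (N - s) * b)"
    using gg_rec[OF n2] dv by simp
  have A: "\<And>k. k \<ge> 1 \<Longrightarrow> a k = gg s b k" using a_eq_gg[OF assms(2,3)] by blast
  have n1: "n \<ge> 1" "n - 1 \<ge> 1" using n2 by auto
  have c1: "1 + (N - s) * b \<ge> 1" by simp
  have eq: "a n = a (n - 1) + a (1 + (N - s) * b)"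
    using rec A[OF n1(1)] A[OF n1(2)] A[OF c1] by linarith
  show ?thesis unfolding e1[symmetric] n_def[symmetric] idx using eq by blast
qed

end
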